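(* Let $A$ be a left brace with $A^{(3)}=\{0\}$ and let $a\in A$. Define $a_1=a$ and $a_{j+1}=a*a_j$ for $j\ge1$. Then for every positive integer $n$ and every $j\ge1$, \[(na)*a_j=\sum_{k=1}^n\binom{n}{k}a_{k+j},\] where $na$ denotes the $n$-fold sum $a+\dots+a$ in $(A,+)$.
   Context: A left brace $(A,+,\cdot)$ is a set $A$ with two binary operations such that $(A,+)$ is an abelian group, $(A,\cdot)$ is a group, and $a(b+c)=ab-a+ac$ for all $a,b,c\in A$. For $a,b\in A$ set $\lambda_a(b)=-a+ab$ and $a*b=-a+ab-b=\lambda_a(b)-b$. For subsets $L,M\subseteq A$, $L*M$ is the subgroup of $(A,+)$ generated by $\{l*m\mid l\in L,m\in M\}$. Set $A^{(1)}=A$ and $A^{(r+1)}=A^{(r)}*A$ for $r\ge1$. *)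

theory Defs
  imports Main
begin

definition left_brace :: "('a::ab_group_add \<Rightarrow> 'a \<Rightarrow> 'a) \<Rightarrow> bool" where
  "left_brace mul \<longleftrightarrow>
     (\<forall>a b c. mul (mul a b) c = mul a (mul b c)) \<and>
     (\<exists>e. \<forall>a. mul e a = a \<and> mul a e = a \<and> (\<exists>b. mul a b = e \<and> mul b a = e)) \<and>
     (\<forall>a b c. mul a (b + c) = mul a b - a + mul a c)"

definition blambda :: "('a::ab_group_add \<Rightarrow> 'a \<Rightarrow> 'a) \<Rightarrow> 'a \<Rightarrow> 'a \<Rightarrow> 'a" where
  "blambda mul a b = - a + mul a b"

definition bstar :: "('a::ab_group_add \<Rightarrow> 'a \<Rightarrow> 'a) \<Rightarrow> 'a \<Rightarrow> 'a \<Rightarrow> 'a" where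
  "bstar mul a b = - a + mul a b - b"

definition add_subgroup_gen :: "'a::ab_group_add set \<Rightarrow> 'a set" where
  "add_subgroup_gen S = \<Inter>{H. 0 \<in> H \<and> (\<forall>x\<in>H. \<forall>y\<in>H. x - y \<in> H) \<and> S \<subseteq> H}"

definition bstar_set :: "('a::ab_group_add \<Rightarrow> 'a \<Rightarrow> 'a) \<Rightarrow> 'a set \<Rightarrow> 'a set \<Rightarrow> 'a set" where
  "bstar_set mul L M = add_subgroup_gen {bstar mul l m | l m. l \<in> L \<and> m \<in> M}"

text \<open>Right series: brace_series mul r = A^(r) for r \<ge> 1 (index 0 is junk = A).\<close>
fun brace_series :: "('a::ab_group_add \<Rightarrow> 'a \<Rightarrow> 'a) \<Rightarrow> nat \<Rightarrow> 'a set" where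
  "brace_series mul 0 = UNIV"
| "brace_series mul (Suc 0) = UNIV"
| "brace_series mul (Suc (Suc r)) = bstar_set mul (brace_series mul (Suc r)) UNIV"

text \<open>a_1 = a, a_(j+1) = a * a_j (index 0 is junk).\<close>
fun aseq :: "('a::ab_group_add \<Rightarrow> 'a \<Rightarrow> 'a) \<Rightarrow> 'a \<Rightarrow> nat \<Rightarrow> 'a" where
  "aseq mul a 0 = a"
| "aseq mul a (Suc 0) = a"
| "aseq mul a (Suc (Suc j)) = bstar mul a (aseq mul a (Suc j))"

definition nsum :: "nat \<Rightarrow> 'a::ab_group_add \<Rightarrow> 'a" where
  "nsum n a = (\<Sum>i<n. a)"

end

theory Submission
  imports Defs
begin

lemma nsum_Suc: "nsum (Suc m) x = nsum m x + x"
  by (simp add: nsum_def)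

lemma nsum_add: "nsum (p + q) x = nsum p x + nsum q x"
  by (induction q) (simp_all add: nsum_def add.assoc)

lemma nsum_0[simp]: "nsum 0 x = 0" by (simp add: nsum_def)
lemma nsum_1[simp]: "nsum 1 x = x" by (simp add: nsum_def)
lemma nsum_S0[simp]: "nsum (Suc 0) x = x" by (simp add: nsum_def)

lemma nsum_plus: "nsum m (x + y) = nsum m x + nsum m y"
  by (induction m) (simp_all add: nsum_Suc algebra_simps)

lemma funpow_additive:
  fixes L :: "'a::plus \<Rightarrow> 'a"
  assumes "\<And>x y. L (x + y) = L x + L y"
  shows "(L ^^ n) (x + y) = (L ^^ n) x + (L ^^ n) y"
  by (induction n) (simp_all add: assms)

lemma binom_lemma:
  fixes L :: "'a::ab_group_add \<Rightarrow> 'a" and s :: "nat \<Rightarrow> 'a"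
  assumes add: "\<And>x y. L (x + y) = L x + L y"
    and step: "\<And>i. L (s i) = s i + s (Suc i)"
  shows "(L ^^ n) (s i) = (\<Sum>k\<le>n. nsum (n choose k) (s (k + i)))"
proof (induction n arbitrary: i)
  case 0 then show ?case by simp
next
  case (Suc n)
  have "(L ^^ Suc n) (s i) = (L ^^ n) (L (s i))" by (simp only: funpow_Suc_right comp_def)
  also have "\<dots> = (L ^^ n) (s i) + (L ^^ n) (s (Suc i))"
    by (simp add: step funpow_additive[OF add])
  also have "\<dots> = (\<Sum>k\<le>n. nsum (n choose k) (s (k + i))) + (\<Sum>k\<le>n. nsum (n choose k) (s (Suc k + i)))"
    using Suc by simp
  finally have L: "(L ^^ Suc n) (s i) = (\<Sum>k\<le>n. nsum (n choose k) (s (k + i))) + (\<Sum>k\<le>n. nsum (n choose k) (s (Suc k + i)))" .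
  have A: "(\<Sum>k\<le>n. nsum (n choose k) (s (k + i))) = s i + (\<Sum>k\<le>n. nsum (n choose Suc k) (s (Suc k + i)))"
  proof -
    have "(\<Sum>k\<le>Suc n. nsum (n choose k) (s (k + i))) = (\<Sum>k\<le>n. nsum (n choose k) (s (k + i)))"
      by (simp add: binomial_eq_0)
    moreover have "(\<Sum>k\<le>Suc n. nsum (n choose k) (s (k + i))) = s i + (\<Sum>k\<le>n. nsum (n choose Suc k) (s (Suc k + i)))"
      by (subst sum.atMost_Suc_shift) simp
    ultimately show ?thesis by simp
  qed
  have "(\<Sum>k\<le>Suc n. nsum (Suc n choose k) (s (k + i))) = s i + (\<Sum>k\<le>n. nsum (Suc n choose Suc k) (s (Suc k + i)))"
    by (subst sum.atMost_Suc_shift) simp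
  also have "\<dots> = s i + (\<Sum>k\<le>n. nsum (n choose Suc k) (s (Suc k + i)) + nsum (n choose k) (s (Suc k + i)))"
    by (simp add: nsum_add add.commute)
  also have "\<dots> = (L ^^ Suc n) (s i)"
    unfolding L A by (simp add: sum.distrib add.assoc)
  finally show ?case by simp
qed

context
  fixes mul :: "'a::ab_group_add \<Rightarrow> 'a \<Rightarrow> 'a"
  assumes lb: "left_brace mul"
begin

lemma assoc: "mul (mul a b) c = mul a (mul b c)"
  using lb unfolding left_brace_def by blast

lemma distr: "mul a (b + c) = mul a b - a + mul a c"
  using lb unfolding left_brace_def by blast

lemma lam_add: "blambda mul x (b + c) = blambda mul x b + blambda mul x c"
  by (simp add: blambda_def distr algebra_simps)

lemma lam_mul: "blambda mul (mul x y) c = blambda mul x (blambda mul y c)"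
proof -
  have "mul y c = y + blambda mul y c" by (simp add: blambda_def)
  hence "mul (mul x y) c = mul x y - x + mul x (blambda mul y c)"
    by (simp add: assoc distr)
  also have "mul x (blambda mul y c) = x + blambda mul x (blambda mul y c)"
    by (simp add: blambda_def)
  finally show ?thesis by (simp add: blambda_def algebra_simps)
qed

lemma mul_eq: "mul x y = x + y + bstar mul x y"
  by (simp add: bstar_def)

lemma lam_shift:
  assumes w: "\<And>z. bstar mul w z = 0"
  shows "blambda mul (x + w) = blambda mul x"
proof
  fix c
  have "mul w x = w + x" using w[of x] mul_eq[of w x] by simp
  hence "blambda mul (x + w) c = blambda mul (mul w x) c" by (simp add: add.commute)
  also have "\<dots> = blambda mul w (blambda mul x c)" by (rule lam_mul)
  also have "\<dots> = blambda mul x c"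
    using w[of "blambda mul x c"] unfolding bstar_def blambda_def by (simp add: algebra_simps)
  finally show "blambda mul (x + w) c = blambda mul x c" .
qed

lemma gen_sub: "S \<subseteq> add_subgroup_gen S"
  unfolding add_subgroup_gen_def by blast

lemma star3:
  assumes "brace_series mul 3 = {0}"
  shows "bstar mul (bstar mul x y) z = 0"
proof -
  have b2: "brace_series mul 2 = bstar_set mul UNIV UNIV" by (simp add: numeral_2_eq_2)
  have b3: "brace_series mul 3 = bstar_set mul (brace_series mul 2) UNIV"
    by (simp add: numeral_3_eq_3 numeral_2_eq_2)
  have "bstar mul x y \<in> {bstar mul l m |l m. l \<in> UNIV \<and> m \<in> UNIV}" by auto
  hence m2: "bstar mul x y \<in> brace_series mul 2"
    unfolding b2 bstar_set_def by (rule subsetD[OF gen_sub])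
  have "bstar mul (bstar mul x y) z \<in> {bstar mul l m |l m. l \<in> brace_series mul 2 \<and> m \<in> UNIV}"
    using m2 by auto
  hence "bstar mul (bstar mul x y) z \<in> brace_series mul 3"
    unfolding b3 bstar_set_def by (rule subsetD[OF gen_sub])
  thus ?thesis using assms by simp
qed

lemma lam_nsum:
  assumes "brace_series mul 3 = {0}"
  shows "blambda mul (nsum (Suc n) a) = blambda mul a ^^ Suc n"
proof (induction n)
  case 0 then show ?case by simp
next
  case (Suc n)
  define x where "x = nsum (Suc n) a"
  have "blambda mul (nsum (Suc (Suc n)) a) = blambda mul (x + a + bstar mul x a)"
    unfolding x_def nsum_Suc[of "Suc n"]
    using lam_shift[of "bstar mul x a" "x + a"] star3[OF assms] x_def by simp
  also have "\<dots> = blambda mul (mul x a)" by (simp add: mul_eq)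
  also have "\<dots> = blambda mul x \<circ> blambda mul a" by (rule ext) (simp add: lam_mul)
  also have "\<dots> = blambda mul a ^^ Suc (Suc n)"
    using Suc x_def by (simp only: funpow_Suc_right)
  finally show ?case .
qed

end

theorem mainTheorem6:
  fixes mul :: "'a::ab_group_add \<Rightarrow> 'a \<Rightarrow> 'a" and a :: 'a and n j :: nat
  assumes "left_brace mul"
    and "brace_series mul 3 = {0}"
    and "n \<ge> 1" and "j \<ge> 1"
  shows "bstar mul (nsum n a) (aseq mul a j)
           = (\<Sum>k=1..n. nsum (n choose k) (aseq mul a (k + j)))"
proof -
  obtain m where n: "n = Suc m" using assms(3) by (cases n) auto
  obtain j' where j: "j = Suc j'" using assms(4) by (cases j) auto
  define s where "s i = aseq mul a (i + j)" for i
  have st: "blambda mul a (s i) = s i + s (Suc i)" for i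
    unfolding s_def j by (simp add: bstar_def blambda_def)
  have "(blambda mul a ^^ n) (s 0) = (\<Sum>k\<le>n. nsum (n choose k) (s (k + 0)))"
    by (rule binom_lemma[where L="blambda mul a" and s=s, OF lam_add[OF assms(1)] st])
  also have "\<dots> = s 0 + (\<Sum>k=1..n. nsum (n choose k) (s k))"
    by (simp add: atMost_atLeast0 sum.atLeast_Suc_atMost)
  finally have E: "(blambda mul a ^^ n) (s 0) = s 0 + (\<Sum>k=1..n. nsum (n choose k) (s k))" .
  have "bstar mul (nsum n a) (aseq mul a j) = blambda mul (nsum n a) (s 0) - s 0"
    by (simp add: s_def bstar_def blambda_def)
  also have "\<dots> = (blambda mul a ^^ n) (s 0) - s 0"
    unfolding n lam_nsum[OF assms(1,2)] ..
  finally show ?thesis using E by (simp add: s_def)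
qed

end
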